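(* Let $N\ge 1$, fix a right transversal of $\Gamma_1(N)$ in $\mathrm{SL}_2(\mathbb{Z})$ with right coset representative function $g\mapsto\overline{g}$, and for $x,y\in\mathrm{SL}_2(\mathbb{Z})$ let $U(x,y)=xy\,(\overline{xy})^{-1}$. Let $T=\begin{pmatrix}1&1\\0&1\end{pmatrix}$. Let $a$ be an integer written as $a=qN+r$ with $q\in\mathbb{Z}$ and $0\le r<N$, and let $M\in\mathrm{SL}_2(\mathbb{Z})$. Then $$U(\overline{M},T^a)=U(\overline{M},T^N)^q\,U(\overline{M},T^r).$$
   Context: $\Gamma_1(N)$ is the subgroup of $\mathrm{SL}_2(\mathbb{Z})$ of matrices $\begin{pmatrix}a&b\\c&d\end{pmatrix}$ with $c\equiv 0$ and $a\equiv d\equiv 1 \pmod N$. A right transversal $\mathcal{T}$ of a subgroup $H$ in a group $G$ is a subset of $G$ containing the identity and exactly one element of each right coset $Hg$; the right coset representative function sends $g$ to the unique $\overline{g}\in\mathcal{T}$ with $Hg=H\overline{g}$. *)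

theory Defs
  imports "HOL-Analysis.Analysis" "HOL-Algebra.Coset"
begin

text \<open>SL_2(Z) as a HOL-Algebra monoid on 2x2 integer matrices; entries a = A$1$1,
  b = A$1$2, c = A$2$1, d = A$2$2.\<close>

definition SL2Z :: "(int^2^2) monoid" where
  "SL2Z = \<lparr>carrier = {A. det A = 1}, mult = (**), one = mat 1\<rparr>"

definition Gamma1 :: "nat \<Rightarrow> (int^2^2) set" where
  "Gamma1 N = {A \<in> carrier SL2Z.
      A$2$1 mod int N = 0 \<and> A$1$1 mod int N = 1 mod int N \<and> A$2$2 mod int N = 1 mod int N}"

definition right_transversal :: "(int^2^2) set \<Rightarrow> (int^2^2) set \<Rightarrow> bool" where
  "right_transversal H Tr \<longleftrightarrow>
     Tr \<subseteq> carrier SL2Z \<and> \<one>\<^bsub>SL2Z\<^esub> \<in> Tr \<and>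
     (\<forall>g \<in> carrier SL2Z. \<exists>!t. t \<in> Tr \<and> H #>\<^bsub>SL2Z\<^esub> g = H #>\<^bsub>SL2Z\<^esub> t)"

definition coset_rep :: "(int^2^2) set \<Rightarrow> (int^2^2) set \<Rightarrow> int^2^2 \<Rightarrow> int^2^2" where
  "coset_rep H Tr g = (THE t. t \<in> Tr \<and> H #>\<^bsub>SL2Z\<^esub> g = H #>\<^bsub>SL2Z\<^esub> t)"

definition U :: "(int^2^2) set \<Rightarrow> (int^2^2) set \<Rightarrow> int^2^2 \<Rightarrow> int^2^2 \<Rightarrow> int^2^2" where
  "U H Tr x y = x \<otimes>\<^bsub>SL2Z\<^esub> y \<otimes>\<^bsub>SL2Z\<^esub> inv\<^bsub>SL2Z\<^esub> (coset_rep H Tr (x \<otimes>\<^bsub>SL2Z\<^esub> y))"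

definition Tmat :: "int^2^2" where
  "Tmat = vector [vector [1, 1], vector [0, 1]]"

end

theory Submission
  imports Defs
begin

definition adj2 :: "int^2^2 \<Rightarrow> int^2^2" where
  "adj2 A = vector [vector [A$2$2, - A$1$2], vector [- A$2$1, A$1$1]]"

definition Tk :: "int \<Rightarrow> int^2^2" where
  "Tk k = vector [vector [1, k], vector [0, 1]]"

lemma mat2_eq: "(A::int^2^2) = B \<longleftrightarrow>
   A$1$1 = B$1$1 \<and> A$1$2 = B$1$2 \<and> A$2$1 = B$2$1 \<and> A$2$2 = B$2$2"
  by (auto simp: vec_eq_iff forall_2)

lemma mult2_entries:
  fixes A B :: "int^2^2"
  shows "(A ** B)$1$1 = A$1$1 * B$1$1 + A$1$2 * B$2$1"
    "(A ** B)$1$2 = A$1$1 * B$1$2 + A$1$2 * B$2$2"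
    "(A ** B)$2$1 = A$2$1 * B$1$1 + A$2$2 * B$2$1"
    "(A ** B)$2$2 = A$2$1 * B$1$2 + A$2$2 * B$2$2"
  by (simp_all add: matrix_matrix_mult_def sum_2)

lemma mat1_entries: "(mat 1 :: int^2^2)$1$1 = 1" "(mat 1 :: int^2^2)$1$2 = 0"
  "(mat 1 :: int^2^2)$2$1 = 0" "(mat 1 :: int^2^2)$2$2 = 1"
  by (simp_all add: mat_def)

lemma SL2Z_simps [simp]: "carrier SL2Z = {A. det A = 1}" "mult SL2Z = (**)" "one SL2Z = mat 1"
  by (simp_all add: SL2Z_def)

lemma adj2_mult: "det A = 1 \<Longrightarrow> adj2 A ** A = mat 1"
  by (simp add: mat2_eq mult2_entries mat1_entries adj2_def det_2 algebra_simps)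

lemma adj2_det: "det A = 1 \<Longrightarrow> det (adj2 A) = 1"
  by (simp add: adj2_def det_2 algebra_simps)

lemma group_SL2Z: "group SL2Z"
proof (rule groupI)
  fix x assume "x \<in> carrier SL2Z"
  then show "\<exists>y\<in>carrier SL2Z. y \<otimes>\<^bsub>SL2Z\<^esub> x = \<one>\<^bsub>SL2Z\<^esub>"
    using adj2_mult adj2_det by auto
qed (auto simp: det_mul matrix_mul_assoc)

lemma inv_SL2Z: "A \<in> carrier SL2Z \<Longrightarrow> inv\<^bsub>SL2Z\<^esub> A = adj2 A"
  using group.inv_equality[OF group_SL2Z, of "adj2 A" A] adj2_mult adj2_det by auto

lemma dvd_from_mod1: "(x::int) mod n = 1 mod n \<longleftrightarrow> n dvd x - 1"
  by (simp add: mod_eq_dvd_iff)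

lemma dvd_from_mod0: "(x::int) mod n = 0 \<longleftrightarrow> n dvd x"
  by auto

lemma Gamma1_iff: "A \<in> Gamma1 N \<longleftrightarrow> det A = 1 \<and> int N dvd A$2$1 \<and> int N dvd A$1$1 - 1 \<and> int N dvd A$2$2 - 1"
  unfolding Gamma1_def dvd_from_mod1 dvd_eq_mod_eq_0 by simp

lemma subgroup_Gamma1: "subgroup (Gamma1 N) SL2Z"
proof (rule group.subgroupI[OF group_SL2Z])
  show "Gamma1 N \<subseteq> carrier SL2Z" by (auto simp: Gamma1_def)
  show "Gamma1 N \<noteq> {}"
  proof -
    have "mat 1 \<in> Gamma1 N" by (simp add: Gamma1_iff mat1_entries det_I)
    then show ?thesis by blast
  qed
next
  fix A assume A: "A \<in> Gamma1 N"
  then have a: "det A = 1" "int N dvd A$2$1" "int N dvd A$1$1 - 1" "int N dvd A$2$2 - 1"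
    by (simp_all only: Gamma1_iff)
  have e: "adj2 A $2$1 = - A$2$1" "adj2 A $1$1 = A$2$2" "adj2 A $2$2 = A$1$1"
    by (simp_all add: adj2_def)
  have "adj2 A \<in> Gamma1 N"
    unfolding Gamma1_iff e using a adj2_det[OF a(1)] by simp
  then show "inv\<^bsub>SL2Z\<^esub> A \<in> Gamma1 N"
    using a inv_SL2Z by simp
next
  fix A B assume A: "A \<in> Gamma1 N" and B: "B \<in> Gamma1 N"
  let ?n = "int N"
  have a: "det A = 1" "?n dvd A$2$1" "?n dvd A$1$1 - 1" "?n dvd A$2$2 - 1"
    using A by (simp_all only: Gamma1_iff)
  have b: "det B = 1" "?n dvd B$2$1" "?n dvd B$1$1 - 1" "?n dvd B$2$2 - 1"
    using B by (simp_all only: Gamma1_iff)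
  have "(A**B)$2$1 = A$2$1 * B$1$1 + A$2$2 * B$2$1"
    by (simp add: mult2_entries)
  then have 1: "?n dvd (A**B)$2$1" using a(2) b(2) by simp
  have "(A**B)$1$1 - 1 = A$1$1 * (B$1$1 - 1) + (A$1$1 - 1) + A$1$2 * B$2$1"
    by (simp add: mult2_entries algebra_simps)
  then have 2: "?n dvd (A**B)$1$1 - 1"
    by (simp only:) (intro dvd_add dvd_mult a(3) b(2) b(3))
  have "(A**B)$2$2 - 1 = A$2$1 * B$1$2 + A$2$2 * (B$2$2 - 1) + (A$2$2 - 1)"
    by (simp add: mult2_entries algebra_simps)
  then have 3: "?n dvd (A**B)$2$2 - 1"
    by (simp only:) (intro dvd_add dvd_mult dvd_mult2 a(2) a(4) b(4))
  have "det (A ** B) = 1" using a(1) b(1) by (simp add: det_mul)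
  then show "A \<otimes>\<^bsub>SL2Z\<^esub> B \<in> Gamma1 N"
    using 1 2 3 by (simp add: Gamma1_iff)
qed

lemma Tmat_pow_nat: "Tmat [^]\<^bsub>SL2Z\<^esub> (n::nat) = Tk (int n)"
proof (induction n)
  case 0
  then show ?case by (simp add: Tk_def mat2_eq mat1_entries)
next
  case (Suc n)
  then show ?case
    by (simp add: Tk_def Tmat_def mat2_eq mult2_entries)
qed

lemma Tk_det: "det (Tk k) = 1" by (simp add: Tk_def det_2)

lemma conj_Tk:
  assumes "x \<in> carrier SL2Z" "int N dvd k"
  shows "x ** Tk k ** adj2 x \<in> Gamma1 N"
proof -
  have d: "x$1$1 * x$2$2 - x$1$2 * x$2$1 = 1" using assms by (simp add: det_2)
  let ?P = "x ** Tk k ** adj2 x"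
  have e: "?P$1$1 = 1 - x$1$1 * x$2$1 * k" "?P$2$1 = - x$2$1 * x$2$1 * k"
     "?P$2$2 = 1 + x$1$1 * x$2$1 * k"
    using d by (simp_all add: mult2_entries Tk_def adj2_def algebra_simps)
  have "det ?P = 1" using assms Tk_det adj2_det by (simp add: det_mul)
  then show ?thesis using e assms(2) by (simp add: Gamma1_iff)
qed

theorem lemma2p18:
  fixes N :: nat and Tr :: "(int^2^2) set" and a q r :: int and M :: "int^2^2"
  assumes "N \<ge> 1"
    and "right_transversal (Gamma1 N) Tr"
    and "a = q * int N + r" and "0 \<le> r" and "r < int N"
    and "M \<in> carrier SL2Z"
  shows "U (Gamma1 N) Tr (coset_rep (Gamma1 N) Tr M) (Tmat [^]\<^bsub>SL2Z\<^esub> a) =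
         (U (Gamma1 N) Tr (coset_rep (Gamma1 N) Tr M) (Tmat [^]\<^bsub>SL2Z\<^esub> int N)) [^]\<^bsub>SL2Z\<^esub> q
         \<otimes>\<^bsub>SL2Z\<^esub> U (Gamma1 N) Tr (coset_rep (Gamma1 N) Tr M) (Tmat [^]\<^bsub>SL2Z\<^esub> r)"
proof -
  interpret G: group SL2Z by (rule group_SL2Z)
  note [simp del] = SL2Z_simps
  let ?H = "Gamma1 N"
  let ?cr = "coset_rep ?H Tr"
  have sub: "subgroup ?H SL2Z" by (rule subgroup_Gamma1)
  have HS: "?H \<subseteq> carrier SL2Z" by (rule subgroup.subset[OF sub])
  have Tr: "Tr \<subseteq> carrier SL2Z" "\<And>g. g \<in> carrier SL2Z \<Longrightarrow> \<exists>!t. t \<in> Tr \<and> ?H #>\<^bsub>SL2Z\<^esub> g = ?H #>\<^bsub>SL2Z\<^esub> t"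
    using assms(2) by (auto simp: right_transversal_def)
  have crA: "?cr g \<in> Tr \<and> ?H #>\<^bsub>SL2Z\<^esub> g = ?H #>\<^bsub>SL2Z\<^esub> ?cr g" if "g \<in> carrier SL2Z" for g
    unfolding coset_rep_def by (rule theI'[OF Tr(2)[OF that]])
  have crC: "?cr g = t" if "g \<in> carrier SL2Z" "t \<in> Tr" "?H #>\<^bsub>SL2Z\<^esub> g = ?H #>\<^bsub>SL2Z\<^esub> t" for g t
    unfolding coset_rep_def using Tr(2)[OF that(1)] that by (intro the1_equality) auto
  have absorb: "?H #>\<^bsub>SL2Z\<^esub> (h \<otimes>\<^bsub>SL2Z\<^esub> y) = ?H #>\<^bsub>SL2Z\<^esub> y"
    if "h \<in> ?H" "y \<in> carrier SL2Z" for h y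
  proof -
    have hc: "h \<in> carrier SL2Z" using that HS by blast
    have "?H #>\<^bsub>SL2Z\<^esub> (h \<otimes>\<^bsub>SL2Z\<^esub> y) = (?H #>\<^bsub>SL2Z\<^esub> h) #>\<^bsub>SL2Z\<^esub> y"
      using G.coset_mult_assoc[OF HS hc that(2)] by simp
    also have "\<dots> = ?H #>\<^bsub>SL2Z\<^esub> y" using G.coset_join2[OF hc sub that(1)] by simp
    finally show ?thesis .
  qed
  define m where "m = ?cr M"
  have mT: "m \<in> Tr" using crA[OF assms(6)] m_def by simp
  have mc: "m \<in> carrier SL2Z" using mT Tr(1) by blast
  define T where "T = Tmat"
  have Tc: "T \<in> carrier SL2Z" by (simp add: SL2Z_simps T_def Tmat_def det_2)
  define t where "t = T [^]\<^bsub>SL2Z\<^esub> int N"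
  have tc: "t \<in> carrier SL2Z" unfolding t_def by (rule G.int_pow_closed[OF Tc])
  have t_eq: "t = Tk (int N)" unfolding t_def T_def int_pow_int by (rule Tmat_pow_nat)
  define c where "c = m \<otimes>\<^bsub>SL2Z\<^esub> t \<otimes>\<^bsub>SL2Z\<^esub> inv\<^bsub>SL2Z\<^esub> m"
  have cH: "c \<in> ?H" unfolding c_def t_eq using conj_Tk[OF mc, of N "int N"] mc inv_SL2Z by (simp add: SL2Z_simps)
  have cc: "c \<in> carrier SL2Z" using cH HS by blast
  have cancel: "inv\<^bsub>SL2Z\<^esub> m \<otimes>\<^bsub>SL2Z\<^esub> (m \<otimes>\<^bsub>SL2Z\<^esub> z) = z" if "z \<in> carrier SL2Z" for z
    using that mc by (simp add: G.m_assoc[symmetric])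
  have cancel2: "x \<otimes>\<^bsub>SL2Z\<^esub> (inv\<^bsub>SL2Z\<^esub> x \<otimes>\<^bsub>SL2Z\<^esub> z) = z" if "z \<in> carrier SL2Z" "x \<in> carrier SL2Z" for x z
    using that by (simp add: G.m_assoc[symmetric])
  have hom: "(\<lambda>x. m \<otimes>\<^bsub>SL2Z\<^esub> x \<otimes>\<^bsub>SL2Z\<^esub> inv\<^bsub>SL2Z\<^esub> m) \<in> hom SL2Z SL2Z"
  proof (rule homI)
    fix x assume "x \<in> carrier SL2Z"
    then show "m \<otimes>\<^bsub>SL2Z\<^esub> x \<otimes>\<^bsub>SL2Z\<^esub> inv\<^bsub>SL2Z\<^esub> m \<in> carrier SL2Z"
      using mc by (intro G.m_closed G.inv_closed)
  next
    fix x y assume xy: "x \<in> carrier SL2Z" "y \<in> carrier SL2Z"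
    have iy: "y \<otimes>\<^bsub>SL2Z\<^esub> inv\<^bsub>SL2Z\<^esub> m \<in> carrier SL2Z" using xy mc by (intro G.m_closed G.inv_closed)
    have im: "inv\<^bsub>SL2Z\<^esub> m \<in> carrier SL2Z" using mc by (rule G.inv_closed)
    have "m \<otimes>\<^bsub>SL2Z\<^esub> x \<otimes>\<^bsub>SL2Z\<^esub> inv\<^bsub>SL2Z\<^esub> m \<otimes>\<^bsub>SL2Z\<^esub> (m \<otimes>\<^bsub>SL2Z\<^esub> y \<otimes>\<^bsub>SL2Z\<^esub> inv\<^bsub>SL2Z\<^esub> m)
       = m \<otimes>\<^bsub>SL2Z\<^esub> (x \<otimes>\<^bsub>SL2Z\<^esub> (inv\<^bsub>SL2Z\<^esub> m \<otimes>\<^bsub>SL2Z\<^esub> (m \<otimes>\<^bsub>SL2Z\<^esub> (y \<otimes>\<^bsub>SL2Z\<^esub> inv\<^bsub>SL2Z\<^esub> m))))"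
      using xy mc im by (simp only: G.m_assoc G.m_closed)
    also have "\<dots> = m \<otimes>\<^bsub>SL2Z\<^esub> (x \<otimes>\<^bsub>SL2Z\<^esub> (y \<otimes>\<^bsub>SL2Z\<^esub> inv\<^bsub>SL2Z\<^esub> m))"
      using cancel[OF iy] by simp
    also have "\<dots> = m \<otimes>\<^bsub>SL2Z\<^esub> (x \<otimes>\<^bsub>SL2Z\<^esub> y) \<otimes>\<^bsub>SL2Z\<^esub> inv\<^bsub>SL2Z\<^esub> m"
      using xy mc im by (simp only: G.m_assoc G.m_closed)
    finally show "m \<otimes>\<^bsub>SL2Z\<^esub> (x \<otimes>\<^bsub>SL2Z\<^esub> y) \<otimes>\<^bsub>SL2Z\<^esub> inv\<^bsub>SL2Z\<^esub> m =
       m \<otimes>\<^bsub>SL2Z\<^esub> x \<otimes>\<^bsub>SL2Z\<^esub> inv\<^bsub>SL2Z\<^esub> m \<otimes>\<^bsub>SL2Z\<^esub> (m \<otimes>\<^bsub>SL2Z\<^esub> y \<otimes>\<^bsub>SL2Z\<^esub> inv\<^bsub>SL2Z\<^esub> m)" by simp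
  qed
  have cq: "c [^]\<^bsub>SL2Z\<^esub> q = m \<otimes>\<^bsub>SL2Z\<^esub> (t [^]\<^bsub>SL2Z\<^esub> q) \<otimes>\<^bsub>SL2Z\<^esub> inv\<^bsub>SL2Z\<^esub> m"
    unfolding c_def using hom_int_pow[OF hom tc group_SL2Z group_SL2Z, of q] by simp
  have cqH: "c [^]\<^bsub>SL2Z\<^esub> q \<in> ?H" using group.int_pow_closed[OF G.subgroup_imp_group[OF sub]] cH
    unfolding G.int_pow_consistent[OF sub cH] by simp
  have Ta: "T [^]\<^bsub>SL2Z\<^esub> a = t [^]\<^bsub>SL2Z\<^esub> q \<otimes>\<^bsub>SL2Z\<^esub> T [^]\<^bsub>SL2Z\<^esub> r"
    unfolding t_def assms(3) using Tc by (simp add: G.int_pow_mult G.int_pow_pow mult.commute)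
  have mTa: "m \<otimes>\<^bsub>SL2Z\<^esub> T [^]\<^bsub>SL2Z\<^esub> a = c [^]\<^bsub>SL2Z\<^esub> q \<otimes>\<^bsub>SL2Z\<^esub> (m \<otimes>\<^bsub>SL2Z\<^esub> T [^]\<^bsub>SL2Z\<^esub> r)"
    unfolding Ta cq using mc tc Tc by (simp add: G.m_assoc cancel cancel2)
  have mtc: "m \<otimes>\<^bsub>SL2Z\<^esub> t = c \<otimes>\<^bsub>SL2Z\<^esub> m" unfolding c_def using mc tc by (simp add: G.m_assoc cancel cancel2)
  have mTrc: "m \<otimes>\<^bsub>SL2Z\<^esub> T [^]\<^bsub>SL2Z\<^esub> r \<in> carrier SL2Z" by (intro G.m_closed G.int_pow_closed mc Tc)
  have cr1: "?cr (m \<otimes>\<^bsub>SL2Z\<^esub> T [^]\<^bsub>SL2Z\<^esub> a) = ?cr (m \<otimes>\<^bsub>SL2Z\<^esub> T [^]\<^bsub>SL2Z\<^esub> r)"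
  proof (rule crC)
    show "m \<otimes>\<^bsub>SL2Z\<^esub> T [^]\<^bsub>SL2Z\<^esub> a \<in> carrier SL2Z" by (intro G.m_closed G.int_pow_closed mc Tc)
    show "?cr (m \<otimes>\<^bsub>SL2Z\<^esub> T [^]\<^bsub>SL2Z\<^esub> r) \<in> Tr" using crA[OF mTrc] by simp
    show "?H #>\<^bsub>SL2Z\<^esub> (m \<otimes>\<^bsub>SL2Z\<^esub> T [^]\<^bsub>SL2Z\<^esub> a) = ?H #>\<^bsub>SL2Z\<^esub> ?cr (m \<otimes>\<^bsub>SL2Z\<^esub> T [^]\<^bsub>SL2Z\<^esub> r)"
      unfolding mTa absorb[OF cqH mTrc] using crA[OF mTrc] by simp
  qed
  have cr2: "?cr (m \<otimes>\<^bsub>SL2Z\<^esub> t) = m"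
    by (rule crC) (use mc tc cc mT absorb[OF cH mc] mtc in auto)
  have UN: "U ?H Tr m t = c"
    unfolding U_def cr2 c_def by (rule refl)
  have crc: "?cr (m \<otimes>\<^bsub>SL2Z\<^esub> T [^]\<^bsub>SL2Z\<^esub> r) \<in> carrier SL2Z" using crA[OF mTrc] Tr(1) by blast
  have cqc: "c [^]\<^bsub>SL2Z\<^esub> q \<in> carrier SL2Z" using cc by simp
  have "U ?H Tr m (T [^]\<^bsub>SL2Z\<^esub> a) = (m \<otimes>\<^bsub>SL2Z\<^esub> T [^]\<^bsub>SL2Z\<^esub> a) \<otimes>\<^bsub>SL2Z\<^esub> inv\<^bsub>SL2Z\<^esub> ?cr (m \<otimes>\<^bsub>SL2Z\<^esub> T [^]\<^bsub>SL2Z\<^esub> r)"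
    by (simp only: U_def cr1)
  also have "\<dots> = (c [^]\<^bsub>SL2Z\<^esub> q \<otimes>\<^bsub>SL2Z\<^esub> (m \<otimes>\<^bsub>SL2Z\<^esub> T [^]\<^bsub>SL2Z\<^esub> r)) \<otimes>\<^bsub>SL2Z\<^esub> inv\<^bsub>SL2Z\<^esub> ?cr (m \<otimes>\<^bsub>SL2Z\<^esub> T [^]\<^bsub>SL2Z\<^esub> r)"
    by (simp only: mTa)
  also have "\<dots> = c [^]\<^bsub>SL2Z\<^esub> q \<otimes>\<^bsub>SL2Z\<^esub> U ?H Tr m (T [^]\<^bsub>SL2Z\<^esub> r)"
    unfolding U_def by (rule G.m_assoc[OF cqc mTrc G.inv_closed[OF crc]])
  finally have X: "U ?H Tr m (T [^]\<^bsub>SL2Z\<^esub> a) = c [^]\<^bsub>SL2Z\<^esub> q \<otimes>\<^bsub>SL2Z\<^esub> U ?H Tr m (T [^]\<^bsub>SL2Z\<^esub> r)" .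
  have X2: "U ?H Tr (?cr M) (Tmat [^]\<^bsub>SL2Z\<^esub> a) = c [^]\<^bsub>SL2Z\<^esub> q \<otimes>\<^bsub>SL2Z\<^esub> U ?H Tr (?cr M) (Tmat [^]\<^bsub>SL2Z\<^esub> r)"
    using X by (simp only: m_def T_def)
  have UN2: "U ?H Tr (?cr M) (Tmat [^]\<^bsub>SL2Z\<^esub> int N) = c"
    using UN by (simp only: m_def T_def t_def)
  show ?thesis by (subst UN2) (rule X2)
qed

end
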